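(* There exist vectors $\{\phi_i\}_{i=1}^5$ in $\mathbb R^3$ which do phase retrieval, but such that the hyperplanes $\{\phi_i^\perp\}_{i=1}^5$ do not do norm retrieval.
   Context: A family of vectors $\{\phi_i\}$ in $\mathbb R^d$ does phase retrieval if $|\langle x,\phi_i\rangle|=|\langle y,\phi_i\rangle|$ for all $i$ implies $x=\pm y$. A family of subspaces $\{W_i\}$ with orthogonal projections $P_i$ does norm retrieval if $\|P_ix\|=\|P_iy\|$ for all $i$ implies $\|x\|=\|y\|$. Here $\phi_i^\perp=\{x\in\mathbb R^3:\langle x,\phi_i\rangle=0\}$. *)

theory Defs
  imports "HOL-Analysis.Analysis"
begin

definition phase_retrieval :: "'i set \<Rightarrow> ('i \<Rightarrow> 'a::real_inner) \<Rightarrow> bool" where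
  "phase_retrieval I \<phi> \<longleftrightarrow>
     (\<forall>x y. (\<forall>i\<in>I. \<bar>x \<bullet> \<phi> i\<bar> = \<bar>y \<bullet> \<phi> i\<bar>) \<longrightarrow> (x = y \<or> x = - y))"

definition is_orth_proj :: "'a::real_inner set \<Rightarrow> ('a \<Rightarrow> 'a) \<Rightarrow> bool" where
  "is_orth_proj W P \<longleftrightarrow> (\<forall>x. P x \<in> W \<and> (\<forall>w\<in>W. (x - P x) \<bullet> w = 0))"

definition norm_retrieval :: "'i set \<Rightarrow> ('i \<Rightarrow> 'a::real_inner set) \<Rightarrow> bool" where
  "norm_retrieval I W \<longleftrightarrow>
     (\<forall>P. (\<forall>i\<in>I. is_orth_proj (W i) (P i)) \<longrightarrow>
        (\<forall>x y. (\<forall>i\<in>I. norm (P i x) = norm (P i y)) \<longrightarrow> norm x = norm y))"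

definition perp :: "'a::real_inner \<Rightarrow> 'a set" where
  "perp v = {x. x \<bullet> v = 0}"

end

theory Submission
  imports Defs
begin

definition ph :: "nat \<Rightarrow> real^3" where
  "ph i = (if i = 1 then vector [2,0,1] else if i = 2 then vector [2,0,-1]
     else if i = 3 then vector [4,2,1] else if i = 4 then vector [4,-2,1]
     else vector [4,2,-1])"

lemma inner3: "(u::real^3) \<bullet> v = (u$1)*(v$1) + (u$2)*(v$2) + (u$3)*(v$3)"
  by (simp add: inner_vec_def sum_3)

lemma aea: "(\<bar>u::real\<bar> = \<bar>v\<bar>) = (u = v \<or> u = -v)" by auto

lemma key:
  fixes a b c p q r :: real
  assumes "\<bar>2*a+c\<bar> = \<bar>2*p+r\<bar>" "\<bar>2*a-c\<bar> = \<bar>2*p-r\<bar>"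
    "\<bar>4*a+2*b+c\<bar> = \<bar>4*p+2*q+r\<bar>" "\<bar>4*a-2*b+c\<bar> = \<bar>4*p-2*q+r\<bar>"
    "\<bar>4*a+2*b-c\<bar> = \<bar>4*p+2*q-r\<bar>"
  shows "(a=p \<and> b=q \<and> c=r) \<or> (a=-p \<and> b=-q \<and> c=-r)"
  using assms unfolding aea by (elim disjE) linarith+

lemma pr: "phase_retrieval {1..5} ph"
  unfolding phase_retrieval_def
proof (intro allI impI)
  fix x y :: "real^3"
  assume h: "\<forall>i\<in>{1..5}. \<bar>x \<bullet> ph i\<bar> = \<bar>y \<bullet> ph i\<bar>"
  have "\<bar>x \<bullet> ph i\<bar> = \<bar>y \<bullet> ph i\<bar>" if "i \<in> {1,2,3,4,5}" for i
    using h that by auto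
  note hh = this[of 1] this[of 2] this[of 3] this[of 4] this[of 5]
  have "(x$1=y$1 \<and> x$2=y$2 \<and> x$3=y$3) \<or> (x$1=-(y$1) \<and> x$2=-(y$2) \<and> x$3=-(y$3))"
    apply (rule key)
    using hh by (simp_all add: ph_def inner3 algebra_simps)
  then show "x = y \<or> x = - y"
    by (auto simp: vec_eq_iff forall_3)
qed

definition PP :: "nat \<Rightarrow> real^3 \<Rightarrow> real^3" where
  "PP i v = v - ((v \<bullet> ph i) / (ph i \<bullet> ph i)) *\<^sub>R ph i"

lemma ph_nz: "ph i \<bullet> ph i \<noteq> 0"
  by (simp add: ph_def inner3)

lemma proj: "is_orth_proj (perp (ph i)) (PP i)"
  unfolding is_orth_proj_def perp_def PP_def
  using ph_nz[of i]
  by (auto simp: inner_diff_left inner_diff_right inner_commute)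

lemma PPn: "PP i v \<bullet> PP i v = v \<bullet> v - (v \<bullet> ph i)^2 / (ph i \<bullet> ph i)"
  using ph_nz[of i]
  by (simp add: PP_def inner_diff_left inner_diff_right inner_commute power2_eq_square field_simps)

theorem mainTheorem5:
  shows "\<exists>\<phi> :: nat \<Rightarrow> real^3.
           phase_retrieval {1..5} \<phi> \<and>
           \<not> norm_retrieval {1..5} (\<lambda>i. perp (\<phi> i))"
proof (intro exI conjI)
  show "phase_retrieval {1..5} ph" by (rule pr)
  show "\<not> norm_retrieval {1..5} (\<lambda>i. perp (ph i))"
  proof
    assume "norm_retrieval {1..5} (\<lambda>i. perp (ph i))"
    then have nr: "\<And>x y. (\<forall>i\<in>{1..5}. norm (PP i x) = norm (PP i y)) \<Longrightarrow> norm x = norm y"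
      unfolding norm_retrieval_def using proj by blast
    define x :: "real^3" where "x = vector [0,0,1]"
    define y :: "real^3" where "y = vector [2,0,0]"
    have "norm (PP i x) = norm (PP i y)" if "i \<in> {1..5}" for i
    proof -
      have "i = 1 \<or> i = 2 \<or> i = 3 \<or> i = 4 \<or> i = 5" using that by auto
      then have "PP i x \<bullet> PP i x = PP i y \<bullet> PP i y"
        unfolding PPn by (elim disjE; hypsubst) (simp_all add: x_def y_def ph_def inner3)
      then show ?thesis by (simp add: norm_eq_sqrt_inner)
    qed
    then have "norm x = norm y" using nr by blast
    moreover have "norm x \<noteq> norm y"
      by (simp add: norm_eq_sqrt_inner x_def y_def inner3)
    ultimately show False by simp
  qed
qed

end
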